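(* Let $m,n\ge1$ and $k$ be integers with $|k|_m=n$, and let $G=\langle a,b\mid a^m=1=b^n,\ b^{-1}ab=a^k\rangle$. Let $s$ be an odd prime with $\gcd(s,m)=1$, $\zeta$ a primitive $m$-th root of unity in $\overline{\mathbb{F}}_s$, and $q$ a power of $s$. Then the induced representation $\rho^G$ is realizable over $\mathbb{F}_q$ if and only if $q\equiv k^i\pmod m$ for some $i$ with $0\le i\le n-1$.
   Context: $|k|_m$ denotes the multiplicative order of $k$ modulo $m$. $\rho:\langle a\rangle\to\overline{\mathbb{F}}_s^*$ is given by $\rho(a)=\zeta$ and $\rho^G$ is the induced representation of $G$; concretely it acts on a space with basis $e_0,\dots,e_{n-1}$ by $ae_i=\zeta^{k^i}e_i$, $be_i=e_{i+1}$ (indices modulo $n$). A representation of $G$ over $\overline{\mathbb{F}}_s$ is realizable over a subfield $\mathbb{F}_q$ if it is equivalent (over $\overline{\mathbb{F}}_s$) to a matrix representation all of whose matrices have entries in $\mathbb{F}_q$. *)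

theory Defs
  imports "HOL-Computational_Algebra.Computational_Algebra" "HOL-Number_Theory.Number_Theory"
    "Jordan_Normal_Form.Matrix"
begin

definition mult_ord :: "nat \<Rightarrow> int \<Rightarrow> nat" where
  "mult_ord m k = ord m (nat (k mod int m))"

definition primitive_root_of_unity :: "nat \<Rightarrow> 'a::field \<Rightarrow> bool" where
  "primitive_root_of_unity m z \<longleftrightarrow> z ^ m = 1 \<and> (\<forall>d. 0 < d \<and> d < m \<longrightarrow> z ^ d \<noteq> 1)"

definition Fq :: "nat \<Rightarrow> 'a::field set" where
  "Fq q = {x. x ^ q = x}"

text \<open>Matrices of a and b in the induced representation rho^G, w.r.t. basis e_0..e_{n-1}:
  a e_i = zeta^(k^i) e_i,  b e_i = e_{i+1} (indices mod n).\<close>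
definition ind_a :: "nat \<Rightarrow> int \<Rightarrow> 'a::field \<Rightarrow> 'a mat" where
  "ind_a n k z = mat n n (\<lambda>(i,j). if i = j then z powi (k ^ i) else 0)"

definition ind_b :: "nat \<Rightarrow> 'a::field mat" where
  "ind_b n = mat n n (\<lambda>(i,j). if i = (j + 1) mod n then 1 else 0)"

inductive_set gen_mats :: "nat \<Rightarrow> 'a::field mat set \<Rightarrow> 'a mat set" for n gens where
  one: "1\<^sub>m n \<in> gen_mats n gens"
| mul: "M \<in> gen_mats n gens \<Longrightarrow> A \<in> gens \<Longrightarrow> M * A \<in> gen_mats n gens"
| mul_inv: "M \<in> gen_mats n gens \<Longrightarrow> A \<in> gens \<Longrightarrow> A' \<in> carrier_mat n n \<Longrightarrow>
     A * A' = 1\<^sub>m n \<Longrightarrow> M * A' \<in> gen_mats n gens"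

definition realizable_over :: "nat \<Rightarrow> 'a::field set \<Rightarrow> 'a mat set \<Rightarrow> bool" where
  "realizable_over n K Ms \<longleftrightarrow>
     (\<exists>P Q. P \<in> carrier_mat n n \<and> Q \<in> carrier_mat n n \<and> P * Q = 1\<^sub>m n \<and> Q * P = 1\<^sub>m n \<and>
        (\<forall>M\<in>Ms. \<forall>i<n. \<forall>j<n. (P * M * Q) $$ (i, j) \<in> K))"

end

theory Submission
  imports Defs "Jordan_Normal_Form.Determinant"
begin


lemma zeta_powi_mod:
  fixes z :: "'a::field"
  assumes m: "m \<ge> 1" and zm: "z ^ m = 1"
  shows "z powi c = z ^ nat (c mod int m)"
proof -
  have z0: "z \<noteq> 0" using zm m by (cases "z = 0") (auto simp: power_0_left)
  have c: "c = int m * (c div int m) + c mod int m" by simp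
  have "z powi c = z powi (int m * (c div int m)) * z powi (c mod int m)"
    by (subst c, rule power_int_add) (use z0 in auto)
  also have "z powi (int m * (c div int m)) = 1"
    by (simp add: power_int_mult zm)
  also have "z powi (c mod int m) = z ^ nat (c mod int m)"
    proof -
    have "c mod int m \<ge> 0" using m by simp
    hence "c mod int m = int (nat (c mod int m))" by simp
    thus ?thesis by (metis power_int_of_nat)
  qed
  finally show ?thesis by simp
qed

lemma prim_pow_eq:
  fixes z :: "'a::field"
  assumes m: "m \<ge> 1" and p: "primitive_root_of_unity m z" and a: "a < m" and b: "b < m"
    and e: "z ^ a = z ^ b"
  shows "a = b"
proof (rule ccontr)
  assume ne: "a \<noteq> b"
  have zm: "z ^ m = 1" and pr: "\<And>d. 0 < d \<Longrightarrow> d < m \<Longrightarrow> z ^ d \<noteq> 1"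
    using p unfolding primitive_root_of_unity_def by auto
  have z0: "z \<noteq> 0" using zm m by (cases "z = 0") (auto simp: power_0_left)
  have "\<And>u v. u < v \<Longrightarrow> v < m \<Longrightarrow> z ^ u = z ^ v \<Longrightarrow> False"
  proof -
    fix u v assume uv: "u < v" "v < m" "z ^ u = z ^ v"
    have "z ^ v = z ^ u * z ^ (v - u)" using uv(1) by (simp flip: power_add)
    with uv(3) have "z ^ (v - u) = 1" using z0 by simp
    thus False using pr[of "v - u"] uv by simp
  qed
  note * = this
  show False
  proof (cases "a < b")
    case True thus False using * b e by blast
  next
    case False hence "b < a" using ne by simp
    thus False using * a e by metis
  qed
qed

lemma zeta_powi_eq_iff:
  fixes z :: "'a::field"
  assumes m: "m \<ge> 1" and p: "primitive_root_of_unity m z"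
  shows "z powi a = z powi b \<longleftrightarrow> [a = b] (mod int m)"
proof -
  have zm: "z ^ m = 1" using p unfolding primitive_root_of_unity_def by auto
  have l: "nat (c mod int m) < m" for c using m by (simp add: nat_less_iff)
  have "z powi a = z powi b \<longleftrightarrow> nat (a mod int m) = nat (b mod int m)"
    using prim_pow_eq[OF m p l l] by (auto simp: zeta_powi_mod[OF m zm])
  also have "\<dots> \<longleftrightarrow> a mod int m = b mod int m" using m by (auto simp: nat_eq_iff2)
  finally show ?thesis by (simp add: cong_def)
qed

definition Phi :: "nat \<Rightarrow> 'a::field mat \<Rightarrow> 'a mat" where
  "Phi q M = map_mat (\<lambda>x. x ^ q) M"

definition perm_mat :: "nat \<Rightarrow> (nat \<Rightarrow> nat) \<Rightarrow> 'a::field mat" where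
  "perm_mat n f = mat n n (\<lambda>(i,j). if j = f i then 1 else 0)"

definition dgm :: "nat \<Rightarrow> (nat \<Rightarrow> 'a::field) \<Rightarrow> 'a mat" where
  "dgm n d = mat n n (\<lambda>(i,j). if i = j then d i else 0)"

lemma perm_mat_carrier[simp]: "perm_mat n f \<in> carrier_mat n n"
  by (simp add: perm_mat_def)

lemma dgm_carrier[simp]: "dgm n f \<in> carrier_mat n n"
  by (simp add: dgm_def)

lemma perm_mult_index:
  assumes X: "X \<in> carrier_mat n c" and r: "r < n" and j: "j < c" and f: "f r < n"
  shows "(perm_mat n f * X) $$ (r, j) = X $$ (f r, j)"
proof -
  have "(perm_mat n f * X) $$ (r, j) = (\<Sum>i\<in>{0..<n}. (if i = f r then 1 else 0) * X $$ (i, j))"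
    using X r j by (simp add: perm_mat_def scalar_prod_def)
  also have "\<dots> = (\<Sum>i\<in>{0..<n}. (if i = f r then X $$ (i, j) else 0))"
    by (rule sum.cong) auto
  also have "\<dots> = X $$ (f r, j)" using f by simp
  finally show ?thesis .
qed

lemma diag_mult_index:
  assumes X: "X \<in> carrier_mat n c" and r: "r < n" and j: "j < c"
  shows "(dgm n d * X) $$ (r, j) = d r * X $$ (r, j)"
proof -
  have "(dgm n d * X) $$ (r, j) = (\<Sum>i\<in>{0..<n}. (if r = i then d r else 0) * X $$ (i, j))"
    using X r j by (auto simp: dgm_def scalar_prod_def intro!: sum.cong)
  also have "\<dots> = (\<Sum>i\<in>{0..<n}. (if i = r then d r * X $$ (i, j) else 0))"
    by (rule sum.cong) auto
  also have "\<dots> = d r * X $$ (r, j)" using r by simp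
  finally show ?thesis .
qed

lemma perm_mult_perm:
  assumes f: "\<And>i. i < n \<Longrightarrow> f i < n"
  shows "perm_mat n f * perm_mat n g = (perm_mat n (g \<circ> f) :: 'a::field mat)"
proof (rule eq_matI)
  fix i j assume i: "i < dim_row (perm_mat n (g \<circ> f) :: 'a mat)" and j: "j < dim_col (perm_mat n (g \<circ> f) :: 'a mat)"
  hence i': "i < n" and j': "j < n" by (auto simp: perm_mat_def)
  have "(perm_mat n f * perm_mat n g) $$ (i, j) = (perm_mat n g :: 'a mat) $$ (f i, j)"
    by (rule perm_mult_index) (use i' j' f in auto)
  also have "\<dots> = (if j = g (f i) then 1 else 0)"
    unfolding perm_mat_def by (subst index_mat) (use i' j' f in auto)
  also have "\<dots> = (perm_mat n (g \<circ> f) :: 'a mat) $$ (i, j)"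
    unfolding perm_mat_def by (subst index_mat) (use i' j' in auto)
  finally show "(perm_mat n f * perm_mat n g) $$ (i, j) = (perm_mat n (g \<circ> f) :: 'a mat) $$ (i, j)" .
qed (auto simp: perm_mat_def)

lemma perm_mat_cong:
  assumes "\<And>i. i < n \<Longrightarrow> f i = g i"
  shows "perm_mat n f = perm_mat n g"
  by (rule eq_matI) (auto simp: perm_mat_def assms)

lemma perm_mat_id: "perm_mat n (\<lambda>i. i) = 1\<^sub>m n"
  by (rule eq_matI) (auto simp: perm_mat_def)

lemma diag_mult_diag: "dgm n d * dgm n e = dgm n (\<lambda>i. d i * e i)"
proof (rule eq_matI)
  fix i j assume i: "i < dim_row (dgm n (\<lambda>i. d i * e i))" and j: "j < dim_col (dgm n (\<lambda>i. d i * e i))"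
  hence i': "i < n" and j': "j < n" by (auto simp: dgm_def)
  have "(dgm n d * dgm n e) $$ (i, j) = d i * dgm n e $$ (i, j)"
    by (rule diag_mult_index) (use i' j' in auto)
  thus "(dgm n d * dgm n e) $$ (i, j) = dgm n (\<lambda>i. d i * e i) $$ (i, j)"
    using i' j' by (simp add: dgm_def)
qed (auto simp: dgm_def)

lemma diag_one: "dgm n (\<lambda>i. 1) = 1\<^sub>m n"
  by (rule eq_matI) (auto simp: dgm_def)

definition mtr :: "nat \<Rightarrow> 'a::field mat \<Rightarrow> 'a" where
  "mtr n M = (\<Sum>i<n. M $$ (i, i))"

lemma mtr_mult:
  assumes A: "A \<in> carrier_mat n n" and B: "B \<in> carrier_mat n n"
  shows "mtr n (A * B) = (\<Sum>i<n. \<Sum>j<n. A $$ (i, j) * B $$ (j, i))"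
proof -
  have "row A i \<bullet> col B i = (\<Sum>j<n. A $$ (i, j) * B $$ (j, i))" if "i < n" for i
    unfolding scalar_prod_def using A B that by (auto simp: atLeast0LessThan intro!: sum.cong)
  thus ?thesis using A B unfolding mtr_def by (auto intro!: sum.cong)
qed

lemma mtr_comm:
  assumes A: "A \<in> carrier_mat n n" and B: "B \<in> carrier_mat n n"
  shows "mtr n (A * B) = mtr n (B * A)"
proof -
  have "mtr n (A * B) = (\<Sum>i<n. \<Sum>j<n. A $$ (i, j) * B $$ (j, i))" by (rule mtr_mult[OF A B])
  also have "\<dots> = (\<Sum>j<n. \<Sum>i<n. A $$ (i, j) * B $$ (j, i))" by (rule sum.swap)
  also have "\<dots> = mtr n (B * A)"
    unfolding mtr_mult[OF B A] by (auto intro!: sum.cong simp: mult.commute)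
  finally show ?thesis .
qed

lemma Phi_carrier[simp]: "A \<in> carrier_mat n c \<Longrightarrow> Phi q A \<in> carrier_mat n c"
  by (simp add: Phi_def)

lemma Phi_index[simp]: "i < dim_row A \<Longrightarrow> j < dim_col A \<Longrightarrow> Phi q A $$ (i, j) = (A $$ (i, j)) ^ q"
  by (simp add: Phi_def)

lemma Phi_dims[simp]: "dim_row (Phi q A) = dim_row A" "dim_col (Phi q A) = dim_col A"
  by (simp_all add: Phi_def)

lemma Phi_mult:
  fixes A B :: "'a::field mat"
  assumes p: "prime CHAR('a)" and q: "q = CHAR('a) ^ r"
    and A: "A \<in> carrier_mat n c" and B: "B \<in> carrier_mat c d"
  shows "Phi q (A * B) = Phi q A * Phi q B"
proof (rule eq_matI)
  fix i j assume i: "i < dim_row (Phi q A * Phi q B)" and j: "j < dim_col (Phi q A * Phi q B)"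
  hence i': "i < n" and j': "j < d" using A B by auto
  have "Phi q (A * B) $$ (i, j) = (\<Sum>l\<in>{0..<c}. A $$ (i, l) * B $$ (l, j)) ^ q"
    using A B i' j' by (simp add: scalar_prod_def)
  also have "\<dots> = (\<Sum>l\<in>{0..<c}. (A $$ (i, l) * B $$ (l, j)) ^ q)"
    by (rule freshmans_dream_sum'[OF p q])
  also have "\<dots> = (\<Sum>l\<in>{0..<c}. Phi q A $$ (i, l) * Phi q B $$ (l, j))"
    by (rule sum.cong) (use A B i' j' in \<open>simp_all add: power_mult_distrib\<close>)
  also have "\<dots> = (Phi q A * Phi q B) $$ (i, j)"
    using A B i' j' by (simp add: scalar_prod_def)
  finally show "Phi q (A * B) $$ (i, j) = (Phi q A * Phi q B) $$ (i, j)" .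
next
  show "dim_row (Phi q (A * B)) = dim_row (Phi q A * Phi q B)" by simp
  show "dim_col (Phi q (A * B)) = dim_col (Phi q A * Phi q B)" by simp
qed

lemma Phi_one:
  assumes "q > 0"
  shows "Phi q (1\<^sub>m n :: 'a::field mat) = 1\<^sub>m n"
proof (rule eq_matI)
  fix i j assume "i < dim_row (1\<^sub>m n :: 'a mat)" "j < dim_col (1\<^sub>m n :: 'a mat)"
  thus "Phi q (1\<^sub>m n :: 'a mat) $$ (i, j) = 1\<^sub>m n $$ (i, j)" using assms by simp
qed simp_all

lemma frob_inj:
  fixes x y :: "'a::field"
  assumes p: "prime CHAR('a)" and q: "q = CHAR('a) ^ r" and e: "x ^ q = y ^ q"
  shows "x = y"
proof -
  have "x ^ q = (x - y) ^ q + y ^ q"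
    using freshmans_dream'[OF p q, of "x - y" y] by simp
  with e have "(x - y) ^ q = 0" by simp
  thus ?thesis by simp
qed

lemma Fq_sum:
  fixes f :: "nat \<Rightarrow> 'a::field"
  assumes p: "prime CHAR('a)" and q: "q = CHAR('a) ^ r" and f: "\<And>i. i \<in> A \<Longrightarrow> f i \<in> Fq q"
  shows "sum f A \<in> Fq q"
proof -
  have "sum f A ^ q = sum (\<lambda>i. f i ^ q) A" by (rule freshmans_dream_sum'[OF p q])
  also have "\<dots> = sum f A" using f by (auto simp: Fq_def intro!: sum.cong)
  finally show ?thesis by (simp add: Fq_def)
qed



lemma inv_step:
  fixes X X' R :: "'a::field mat"
  assumes p: "prime CHAR('a)" and q: "q = CHAR('a) ^ r" and q0: "q > 0"
    and X: "X \<in> carrier_mat n n" and X': "X' \<in> carrier_mat n n" and R: "R \<in> carrier_mat n n"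
    and XX': "X * X' = 1\<^sub>m n" and gX: "Phi q X * R = R * X"
  shows "Phi q X' * R = R * X'"
proof -
  note as = assoc_mult_mat[of _ n n _ n _ n]
  have "Phi q X * Phi q X' = 1\<^sub>m n"
    using Phi_mult[OF p q X X'] XX' Phi_one[OF q0, of n, where 'a='a] by simp
  hence inv: "Phi q X' * Phi q X = 1\<^sub>m n"
    by (rule mat_mult_left_right_inverse[OF Phi_carrier[OF X] Phi_carrier[OF X']])
  have "R * X' = Phi q X' * Phi q X * R * X'" using R X' inv by simp
  also have "\<dots> = Phi q X' * (Phi q X * R) * X'" using X X' R by (simp add: as)
  also have "\<dots> = Phi q X' * (R * X) * X'" using gX by simp
  also have "\<dots> = Phi q X' * R * (X * X')" using X X' R by (simp add: as)
  also have "\<dots> = Phi q X' * R" using XX' X' R by simp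
  finally show ?thesis by simp
qed

lemma mul_step:
  fixes M X R :: "'a::field mat"
  assumes p: "prime CHAR('a)" and q: "q = CHAR('a) ^ r"
    and M: "M \<in> carrier_mat n n" and X: "X \<in> carrier_mat n n" and R: "R \<in> carrier_mat n n"
    and gM: "Phi q M * R = R * M" and gX: "Phi q X * R = R * X"
  shows "Phi q (M * X) * R = R * (M * X)"
proof -
  note as = assoc_mult_mat[of _ n n _ n _ n]
  have "Phi q (M * X) * R = Phi q M * (Phi q X * R)" using Phi_mult[OF p q M X] M X R by (simp add: as)
  also have "\<dots> = (Phi q M * R) * X" using gX M X R by (simp add: as)
  also have "\<dots> = R * (M * X)" using gM M X R by (simp add: as)
  finally show ?thesis .
qed

lemma mod_shift_comm:
  fixes i a b n :: nat
  shows "((i + a) mod n + b) mod n = ((i + b) mod n + a) mod n"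
  by (simp add: mod_simps ac_simps)

lemma mod_back1:
  fixes i t n :: nat
  assumes "i < n" "t \<le> n"
  shows "((i + t) mod n + (n - t)) mod n = i"
proof -
  have "((i + t) mod n + (n - t)) mod n = (i + t + (n - t)) mod n" by (rule mod_add_left_eq)
  also have "i + t + (n - t) = i + n" using assms by simp
  finally show ?thesis using assms by simp
qed

lemma mod_back2:
  fixes i t n :: nat
  assumes "i < n" "t \<le> n"
  shows "((i + (n - t)) mod n + t) mod n = i"
proof -
  have "((i + (n - t)) mod n + t) mod n = (i + (n - t) + t) mod n" by (rule mod_add_left_eq)
  also have "i + (n - t) + t = i + n" using assms by simp
  finally show ?thesis using assms by simp
qed

lemma Vandermonde_det:
  fixes y :: "nat \<Rightarrow> 'a::field"
  assumes n: "n \<ge> 1" and inj: "inj_on y {..<n}"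
  shows "det (mat n n (\<lambda>(i, l). y i ^ l)) \<noteq> 0"
proof
  let ?W = "mat n n (\<lambda>(i, l). y i ^ l)"
  assume "det ?W = 0"
  then obtain v where v: "v \<in> carrier_vec n" "v \<noteq> 0\<^sub>v n" "?W *\<^sub>v v = 0\<^sub>v n"
    using det_0_iff_vec_prod_zero_field[of ?W n] by auto
  define pp where "pp = (\<Sum>l<n. Polynomial.monom (vec_index v l) l)"
  have cpp: "Polynomial.coeff pp l = (if l < n then vec_index v l else 0)" for l
    unfolding pp_def Polynomial.coeff_sum Polynomial.coeff_monom by (simp add: if_distrib cong: if_cong)
  obtain l where l: "l < n" "vec_index v l \<noteq> 0"
  proof -
    have "\<not> (\<forall>l<n. vec_index v l = 0)"
    proof
      assume "\<forall>l<n. vec_index v l = 0"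
      hence "v = 0\<^sub>v n" using v(1) by (intro eq_vecI) auto
      thus False using v(2) by simp
    qed
    thus ?thesis using that by blast
  qed
  have pp0: "pp \<noteq> 0"
  proof
    assume "pp = 0"
    hence "Polynomial.coeff pp l = 0" by simp
    thus False using cpp[of l] l by simp
  qed
  have dpp: "degree pp \<le> n - 1"
    by (rule degree_le) (use cpp in auto)
  have roots: "poly pp (y i) = 0" if i: "i < n" for i
  proof -
    have "poly pp (y i) = (\<Sum>l<n. vec_index v l * y i ^ l)"
      unfolding pp_def poly_sum poly_monom ..
    also have "\<dots> = (?W *\<^sub>v v) $ i"
      using v(1) i by (auto simp: scalar_prod_def atLeast0LessThan mult.commute intro!: sum.cong)
    also have "\<dots> = 0" using v(3) i by simp
    finally show ?thesis .
  qed
  have sub: "y ` {..<n} \<subseteq> {x. poly pp x = 0}" using roots by auto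
  have "n = card (y ` {..<n})" using inj by (simp add: card_image)
  also have "\<dots> \<le> card {x. poly pp x = 0}" by (rule card_mono[OF poly_roots_finite[OF pp0] sub])
  also have "\<dots> \<le> degree pp" by (rule card_poly_roots_bound[OF pp0])
  finally show False using dpp n by simp
qed

lemma orth_sum:
  fixes w x :: "'a::field"
  assumes m: "m \<ge> 1" and w: "w ^ m = 1" and x: "x ^ m = 1"
  shows "(\<Sum>j<m. (x * w ^ (m - 1)) ^ j) = (if x = w then of_nat m else 0)"
proof -
  from m obtain m' where m': "m = Suc m'" by (cases m) auto
  have ww: "w * w ^ (m - 1) = 1" using w by (simp add: m')
  show ?thesis
  proof (cases "x = w")
    case True thus ?thesis using ww by simp
  next
    case False
    have v1: "x * w ^ (m - 1) \<noteq> 1"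
    proof
      assume "x * w ^ (m - 1) = 1"
      note a = this
      have "x = x * (w * w ^ (m - 1))" using ww by simp
      also have "\<dots> = (x * w ^ (m - 1)) * w" by (simp add: ac_simps)
      also have "\<dots> = w" using a by simp
      finally have "x = w" .
      thus False using False by simp
    qed
    have "(x * w ^ (m - 1)) ^ m = x ^ m * (w ^ m) ^ (m - 1)"
      by (simp add: power_mult_distrib flip: power_mult) (simp add: mult.commute)
    also have "\<dots> = 1" using w x by simp
    finally have vm: "(x * w ^ (m - 1)) ^ m = 1" .
    show ?thesis using geometric_sum[OF v1, of m] vm False by simp
  qed
qed

theorem theorem2p5:
  fixes m n s q :: nat and k :: int and \<zeta> :: "'F::alg_closed_field"
  assumes "m \<ge> 1" and "n \<ge> 1"
    and "mult_ord m k = n"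
    and "prime s" and "odd s" and "coprime s m"
    and "CHAR('F) = s"
    and "\<forall>x::'F. \<exists>r>0. x ^ (s ^ r) = x"
    and "primitive_root_of_unity m \<zeta>"
    and "\<exists>r\<ge>1. q = s ^ r"
  shows "realizable_over n (Fq q) (gen_mats n {ind_a n k \<zeta>, ind_b n})
     \<longleftrightarrow> (\<exists>i. 0 \<le> i \<and> i \<le> n - 1 \<and> [int q = k ^ i] (mod int m))"
proof -
  note m = assms(1) and n1 = assms(2) and prim = assms(9)
  let ?A = "ind_a n k \<zeta>" and ?B = "ind_b n :: 'F mat"
  have zm: "\<zeta> ^ m = 1" using prim unfolding primitive_root_of_unity_def by auto
  have pC: "prime CHAR('F)" using assms(4,7) by simp
  obtain r where r: "r \<ge> 1" "q = s ^ r" using assms(10) by auto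
  have qC: "q = CHAR('F) ^ r" using r assms(7) by simp
  have q0: "q > 0" using r assms(4) by (simp add: prime_gt_0_nat)
  define K where "K = nat (k mod int m)"
  have ordK: "ord m K = n" using assms(3) unfolding mult_ord_def K_def .
  have intK: "int K = k mod int m" using m by (simp add: K_def)
  have kK: "[k ^ d = 1] (mod int m) \<longleftrightarrow> [K ^ d = 1] (mod m)" for d
  proof -
    have "[k ^ d = 1] (mod int m) \<longleftrightarrow> [(k mod int m) ^ d = 1] (mod int m)"
      by (simp add: cong_def power_mod)
    also have "\<dots> \<longleftrightarrow> [int (K ^ d) = int 1] (mod int m)" by (simp add: intK)
    also have "\<dots> \<longleftrightarrow> [K ^ d = 1] (mod m)" by (rule cong_int_iff)
    finally show ?thesis .
  qed
  have kn: "[k ^ n = 1] (mod int m)" using kK ord_works[of K m] ordK by simp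
  have kmin: "\<not> [k ^ d = 1] (mod int m)" if "0 < d" "d < n" for d
    using kK ord_minimal[of d m K] ordK that by simp
  define y where "y i = \<zeta> powi (k ^ i)" for i
  have yeq: "y i = y j \<longleftrightarrow> [k ^ i = k ^ j] (mod int m)" for i j
    unfolding y_def by (rule zeta_powi_eq_iff[OF m prim])
  have kper: "[k ^ i = k ^ (i mod n)] (mod int m)" for i
  proof -
    have "k ^ i = k ^ (n * (i div n) + i mod n)" by simp
    also have "\<dots> = (k ^ n) ^ (i div n) * k ^ (i mod n)" by (simp only: power_add power_mult)
    finally have "k ^ i = (k ^ n) ^ (i div n) * k ^ (i mod n)" .
    moreover have "[(k ^ n) ^ (i div n) * k ^ (i mod n) = 1 ^ (i div n) * k ^ (i mod n)] (mod int m)"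
      by (intro cong_mult cong_pow kn cong_refl)
    ultimately show ?thesis by simp
  qed
  have yper: "y (i mod n) = y i" for i unfolding yeq by (rule cong_sym[OF kper])
  have yinj0: False if ab: "a < b" "b < n" "[k ^ a = k ^ b] (mod int m)" for a b
  proof -
    have "[k ^ a * k ^ (n - b) = k ^ b * k ^ (n - b)] (mod int m)"
      using ab(3) by (rule cong_mult[OF _ cong_refl])
    moreover have "k ^ a * k ^ (n - b) = k ^ (a + (n - b))" by (simp add: power_add)
    moreover have "k ^ b * k ^ (n - b) = k ^ n" using ab by (simp flip: power_add)
    ultimately have "[k ^ (a + (n - b)) = k ^ n] (mod int m)" by simp
    hence "[k ^ (a + (n - b)) = 1] (mod int m)" using kn cong_trans by blast
    moreover have "0 < a + (n - b)" "a + (n - b) < n" using ab by auto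
    ultimately show False using kmin[of "a + (n - b)"] by simp
  qed
  have yinj: "i = j" if "i < n" "j < n" "y i = y j" for i j
  proof (rule ccontr)
    assume ij: "i \<noteq> j"
    have c: "[k ^ i = k ^ j] (mod int m)" using that(3) yeq by simp
    show False
    proof (cases "i < j")
      case True thus False using yinj0[of i j] c that by blast
    next
      case False hence "j < i" using ij by simp
      thus False using yinj0[of j i] cong_sym[OF c] that by blast
    qed
  qed
  have ym: "y i ^ m = 1" for i
  proof -
    have "y i = \<zeta> ^ nat (k ^ i mod int m)" unfolding y_def by (rule zeta_powi_mod[OF m zm])
    hence "y i ^ m = (\<zeta> ^ m) ^ nat (k ^ i mod int m)" by (simp add: power_mult[symmetric] mult.commute)
    thus ?thesis using zm by simp
  qed
  have ypow: "y i ^ q = \<zeta> powi (k ^ i * int q)" for i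
    unfolding y_def by (simp add: power_int_mult)
  have y0: "y 0 = \<zeta>" by (simp add: y_def)
  have yA: "?A = dgm n y" by (rule eq_matI) (auto simp: ind_a_def dgm_def y_def)
  show ?thesis
  proof
    assume "realizable_over n (Fq q) (gen_mats n {?A, ?B})"
    then obtain P Q where PQ: "P \<in> carrier_mat n n" "Q \<in> carrier_mat n n" "P * Q = 1\<^sub>m n" "Q * P = 1\<^sub>m n"
      and ent: "\<And>M i j. M \<in> gen_mats n {?A, ?B} \<Longrightarrow> i < n \<Longrightarrow> j < n \<Longrightarrow> (P * M * Q) $$ (i, j) \<in> Fq q"
      unfolding realizable_over_def by blast
    have Aj: "dgm n (\<lambda>i. y i ^ j) \<in> gen_mats n {?A, ?B}" for j
    proof (induction j)
      case 0
      show ?case using gen_mats.one[of n "{?A, ?B}"] by (simp add: diag_one)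
    next
      case (Suc j)
      have "dgm n (\<lambda>i. y i ^ Suc j) = dgm n (\<lambda>i. y i ^ j) * ?A"
        by (simp add: yA diag_mult_diag mult.commute)
      thus ?case using gen_mats.mul[OF Suc.IH, of ?A] by simp
    qed
    have psum: "(\<Sum>i<n. (y i ^ q) ^ j) = (\<Sum>i<n. y i ^ j)" for j
    proof -
      let ?D = "dgm n (\<lambda>i. y i ^ j)"
      have Dc: "?D \<in> carrier_mat n n" by simp
      have "mtr n (P * ?D * Q) = mtr n (Q * (P * ?D))" by (rule mtr_comm) (use PQ Dc in auto)
      also have "Q * (P * ?D) = (Q * P) * ?D" by (rule assoc_mult_mat[symmetric, OF PQ(2) PQ(1) Dc])
      also have "\<dots> = ?D" using PQ(4) left_mult_one_mat[OF Dc] by simp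
      finally have tr: "mtr n (P * ?D * Q) = mtr n ?D" .
      have trD: "mtr n ?D = (\<Sum>i<n. y i ^ j)" unfolding mtr_def by (rule sum.cong) (auto simp: dgm_def)
      have "mtr n (P * ?D * Q) \<in> Fq q" unfolding mtr_def by (rule Fq_sum[OF pC qC]) (use ent Aj in auto)
      hence "(\<Sum>i<n. y i ^ j) ^ q = (\<Sum>i<n. y i ^ j)" using tr trD by (simp add: Fq_def)
      moreover have "(\<Sum>i<n. y i ^ j) ^ q = (\<Sum>i<n. (y i ^ q) ^ j)"
        by (subst freshmans_dream_sum'[OF pC qC]) (simp add: power_mult[symmetric] mult.commute)
      ultimately show ?thesis by simp
    qed
    define w where "w = \<zeta> ^ q"
    have wm: "w ^ m = 1"
    proof -
      have "w ^ m = (\<zeta> ^ m) ^ q" unfolding w_def by (simp only: power_mult[symmetric] mult.commute)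
      thus ?thesis using zm by simp
    qed
    define c where "c = w ^ (m - 1)"
    have key: "(\<Sum>j<m. c ^ j * (\<Sum>i<n. f i ^ j)) = (\<Sum>i<n. if f i = w then of_nat m else 0)"
      if fm: "\<And>i. f i ^ m = 1" for f :: "nat \<Rightarrow> 'F"
    proof -
      have "(\<Sum>j<m. c ^ j * (\<Sum>i<n. f i ^ j)) = (\<Sum>j<m. \<Sum>i<n. (f i * c) ^ j)"
        by (simp add: sum_distrib_left power_mult_distrib mult.commute)
      also have "\<dots> = (\<Sum>i<n. \<Sum>j<m. (f i * c) ^ j)" by (rule sum.swap)
      also have "\<dots> = (\<Sum>i<n. if f i = w then of_nat m else 0)"
        by (rule sum.cong) (use orth_sum[OF m wm fm] in \<open>simp_all add: c_def\<close>)
      finally show ?thesis .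
    qed
    have yqm: "(y i ^ q) ^ m = 1" for i
    proof -
      have "(y i ^ q) ^ m = (y i ^ m) ^ q" by (simp only: power_mult[symmetric] mult.commute)
      thus ?thesis using ym[of i] by simp
    qed
    have "(\<Sum>i<n. if y i ^ q = w then (of_nat m :: 'F) else 0) = (\<Sum>i<n. if i = 0 then of_nat m else 0)"
    proof (rule sum.cong)
      fix i assume "i \<in> {..<n}"
      hence i: "i < n" by simp
      have "y i ^ q = w \<longleftrightarrow> i = 0"
      proof
        assume "y i ^ q = w"
        hence "y i ^ q = y 0 ^ q" using y0 w_def by simp
        hence "y i = y 0" by (rule frob_inj[OF pC qC])
        thus "i = 0" using yinj[of i 0] i n1 by simp
      qed (use y0 w_def in simp)
      thus "(if y i ^ q = w then (of_nat m :: 'F) else 0) = (if i = 0 then of_nat m else 0)" by simp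
    qed simp
    also have "\<dots> = of_nat m" using n1 by simp
    finally have S1: "(\<Sum>i<n. if y i ^ q = w then (of_nat m :: 'F) else 0) = of_nat m" .
    have "(\<Sum>i<n. if y i = w then (of_nat m :: 'F) else 0) = (\<Sum>j<m. c ^ j * (\<Sum>i<n. y i ^ j))"
      by (rule key[symmetric]) (rule ym)
    also have "\<dots> = (\<Sum>j<m. c ^ j * (\<Sum>i<n. (y i ^ q) ^ j))" by (simp add: psum)
    also have "\<dots> = (\<Sum>i<n. if y i ^ q = w then (of_nat m :: 'F) else 0)" by (rule key) (rule yqm)
    finally have S2: "(\<Sum>i<n. if y i = w then (of_nat m :: 'F) else 0) = of_nat m" using S1 by simp
    have sdm: "\<not> s dvd m"
      using coprime_common_divisor[OF assms(6) dvd_refl] assms(4) not_prime_unit by blast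
    have m0: "(of_nat m :: 'F) \<noteq> 0" using sdm assms(7) by (simp add: of_nat_eq_0_iff_char_dvd)
    obtain i where i: "i < n" "y i = w"
    proof (rule ccontr)
      assume "\<not> thesis"
      hence "\<forall>i<n. y i \<noteq> w" using that by blast
      hence "(\<Sum>i<n. if y i = w then (of_nat m :: 'F) else 0) = 0" by simp
      thus False using S2 m0 by simp
    qed
    have "\<zeta> powi (k ^ i) = \<zeta> powi (int q)" using i(2) unfolding y_def w_def by simp
    hence "[k ^ i = int q] (mod int m)" using zeta_powi_eq_iff[OF m prim, of "k ^ i" "int q"] by simp
    hence "[int q = k ^ i] (mod int m)" by (rule cong_sym)
    moreover have "i \<le> n - 1" using i(1) by simp
    ultimately show "\<exists>i. 0 \<le> i \<and> i \<le> n - 1 \<and> [int q = k ^ i] (mod int m)" by blast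
  next
    assume "\<exists>i. 0 \<le> i \<and> i \<le> n - 1 \<and> [int q = k ^ i] (mod int m)"
    then obtain t where t0: "t \<le> n - 1" and t2: "[int q = k ^ t] (mod int m)" by blast
    have t: "t < n" "[int q = k ^ t] (mod int m)" using t0 t2 n1 by auto
    have n0: "n > 0" using n1 by simp
    have yfrob: "y i ^ q = y ((i + t) mod n)" for i
    proof -
      have "[k ^ i * int q = k ^ i * k ^ t] (mod int m)" by (rule cong_mult[OF cong_refl t(2)])
      hence "[k ^ i * int q = k ^ (i + t)] (mod int m)" by (simp add: power_add)
      hence "y i ^ q = y (i + t)" unfolding ypow by (simp only: y_def zeta_powi_eq_iff[OF m prim])
      thus ?thesis using yper by simp
    qed
    define h where "h i = (i + t) mod n" for i
    define h' where "h' i = (i + (n - t)) mod n" for i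
    define g1 where "g1 i = (i + (n - 1)) mod n" for i
    define R where "R = (perm_mat n h :: 'F mat)"
    define R' where "R' = (perm_mat n h' :: 'F mat)"
    have hn: "h i < n" "h' i < n" "g1 i < n" for i using n0 by (auto simp: h_def h'_def g1_def)
    have Rc: "R \<in> carrier_mat n n" "R' \<in> carrier_mat n n" by (simp_all add: R_def R'_def)
    have RR': "R * R' = 1\<^sub>m n"
    proof -
      have "R * R' = perm_mat n (h' \<circ> h)" unfolding R_def R'_def by (rule perm_mult_perm) (use hn in auto)
      also have "\<dots> = perm_mat n (\<lambda>i. i)"
      proof (rule perm_mat_cong)
        fix i assume "i < n"
        thus "(h' \<circ> h) i = i" unfolding h_def h'_def comp_def by (rule mod_back1) (use t(1) in auto)
      qed
      finally show ?thesis by (simp add: perm_mat_id)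
    qed
    have R'R: "R' * R = 1\<^sub>m n"
    proof -
      have "R' * R = perm_mat n (h \<circ> h')" unfolding R_def R'_def by (rule perm_mult_perm) (use hn in auto)
      also have "\<dots> = perm_mat n (\<lambda>i. i)"
      proof (rule perm_mat_cong)
        fix i assume "i < n"
        thus "(h \<circ> h') i = i" unfolding h_def h'_def comp_def by (rule mod_back2) (use t(1) in auto)
      qed
      finally show ?thesis by (simp add: perm_mat_id)
    qed
    have Bp: "?B = perm_mat n g1"
    proof (rule eq_matI)
      fix i j assume "i < dim_row (perm_mat n g1 :: 'F mat)" "j < dim_col (perm_mat n g1 :: 'F mat)"
      hence ij: "i < n" "j < n" by (auto simp: perm_mat_def)
      have "i = (j + 1) mod n \<longleftrightarrow> j = g1 i"
      proof
        assume a: "i = (j + 1) mod n"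
        have "((j + 1) mod n + (n - 1)) mod n = j" by (rule mod_back1) (use ij n0 in auto)
        thus "j = g1 i" unfolding g1_def a by (rule sym)
      next
        assume a: "j = g1 i"
        have "((i + (n - 1)) mod n + 1) mod n = i" by (rule mod_back2) (use ij n0 in auto)
        thus "i = (j + 1) mod n" unfolding g1_def a by (rule sym)
      qed
      thus "?B $$ (i, j) = perm_mat n g1 $$ (i, j)" using ij by (simp add: ind_b_def perm_mat_def)
    qed (auto simp: ind_b_def perm_mat_def)
    have PhiA: "Phi q (dgm n y) = dgm n (\<lambda>i. y i ^ q)"
      by (rule eq_matI) (use q0 in \<open>auto simp: dgm_def\<close>)
    have gA: "Phi q ?A * R = R * ?A"
    proof (rule eq_matI)
      fix i j assume "i < dim_row (R * ?A)" "j < dim_col (R * ?A)"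
      hence ij: "i < n" "j < n" by (auto simp: R_def ind_a_def perm_mat_def)
      have "(Phi q ?A * R) $$ (i, j) = y i ^ q * R $$ (i, j)"
        unfolding yA PhiA by (rule diag_mult_index) (use ij Rc in auto)
      also have "\<dots> = (if j = h i then y (h i) else 0)"
        using ij by (simp add: R_def perm_mat_def yfrob h_def)
      also have "\<dots> = dgm n y $$ (h i, j)" using ij hn by (auto simp: dgm_def)
      also have "\<dots> = (R * ?A) $$ (i, j)"
        unfolding yA R_def by (rule perm_mult_index[symmetric]) (use ij hn in auto)
      finally show "(Phi q ?A * R) $$ (i, j) = (R * ?A) $$ (i, j)" .
    qed (auto simp: R_def ind_a_def perm_mat_def)
    have PhiB: "Phi q ?B = ?B"
      by (rule eq_matI) (use q0 in \<open>auto simp: ind_b_def\<close>)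
    have gB: "Phi q ?B * R = R * ?B"
    proof -
      have "?B * R = perm_mat n (h \<circ> g1)" unfolding Bp R_def by (rule perm_mult_perm) (use hn in auto)
      also have "\<dots> = perm_mat n (g1 \<circ> h)"
        by (rule perm_mat_cong) (simp only: h_def g1_def comp_def mod_shift_comm)
      also have "\<dots> = R * ?B" unfolding Bp R_def by (rule perm_mult_perm[symmetric]) (use hn in auto)
      finally show ?thesis using PhiB by simp
    qed
    have gens: "X \<in> carrier_mat n n \<and> Phi q X * R = R * X" if "X \<in> {?A, ?B}" for X
      using that gA gB by (auto simp: ind_a_def ind_b_def)
    have inv: "M \<in> carrier_mat n n \<and> Phi q M * R = R * M" if "M \<in> gen_mats n {?A, ?B}" for M
      using that
    proof (induction rule: gen_mats.induct)
      case one
      thus ?case using Phi_one[OF q0, of n, where 'a='F] Rc by simp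
    next
      case (mul M X)
      thus ?case using mul_step[OF pC qC, of M n X R] gens[of X] Rc by auto
    next
      case (mul_inv M X X')
      have gX': "Phi q X' * R = R * X'"
        using inv_step[OF pC qC q0, of X n X' R] gens[OF mul_inv(2)] mul_inv(3,4) Rc by auto
      thus ?case using mul_step[OF pC qC, of M n X' R] mul_inv Rc by auto
    qed
    define W where "W = mat n n (\<lambda>(i, l). y i ^ l)"
    have Wc: "W \<in> carrier_mat n n" by (simp add: W_def)
    have detW: "det W \<noteq> 0" unfolding W_def
      by (rule Vandermonde_det[OF n1]) (use yinj in \<open>auto simp: inj_on_def\<close>)
    have "W \<in> Units (ring_mat TYPE('F) n undefined)" by (rule det_non_zero_imp_unit[OF Wc detW])
    then obtain P0 where P0: "P0 \<in> carrier_mat n n" "P0 * W = 1\<^sub>m n" "W * P0 = 1\<^sub>m n"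
      unfolding Units_def by (auto simp: ring_mat_simps)
    have PhiW: "Phi q W = R * W"
    proof (rule eq_matI)
      fix i l assume "i < dim_row (R * W)" "l < dim_col (R * W)"
      hence il: "i < n" "l < n" using Rc Wc by auto
      have "Phi q W $$ (i, l) = (y i ^ q) ^ l" using il
        by (simp add: W_def power_mult[symmetric] mult.commute)
      also have "\<dots> = W $$ (h i, l)" using il hn by (simp add: W_def yfrob h_def)
      also have "\<dots> = (R * W) $$ (i, l)"
        unfolding R_def by (rule perm_mult_index[symmetric]) (use il hn Wc in auto)
      finally show "Phi q W $$ (i, l) = (R * W) $$ (i, l)" .
    qed (use Rc Wc in auto)
    note as = assoc_mult_mat[of _ n n _ n _ n]
    have PhiP0: "Phi q P0 = P0 * R'"
    proof -
      have e1: "Phi q P0 * (R * W) = 1\<^sub>m n"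
        using Phi_mult[OF pC qC P0(1) Wc] P0(2) Phi_one[OF q0, of n, where 'a='F] PhiW by simp
      have "Phi q P0 * R = Phi q P0 * R * (W * P0)" using P0 Rc by simp
      also have "\<dots> = (Phi q P0 * (R * W)) * P0" using P0 Rc Wc by (simp add: as)
      also have "\<dots> = P0" using e1 P0 by simp
      finally have e2: "Phi q P0 * R = P0" .
      have "Phi q P0 = Phi q P0 * (R * R')" using RR' P0 by simp
      also have "\<dots> = P0 * R'" using e2 P0 Rc by (simp add: as[symmetric])
      finally show ?thesis .
    qed
    show "realizable_over n (Fq q) (gen_mats n {?A, ?B})"
      unfolding realizable_over_def
    proof (intro exI conjI ballI allI impI)
      show "P0 \<in> carrier_mat n n" "W \<in> carrier_mat n n" "P0 * W = 1\<^sub>m n" "W * P0 = 1\<^sub>m n"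
        using P0 Wc by auto
      fix M i j assume M: "M \<in> gen_mats n {?A, ?B}" and ij: "i < n" "j < n"
      have Mc: "M \<in> carrier_mat n n" and gM: "Phi q M * R = R * M" using inv[OF M] by auto
      have "Phi q (P0 * M * W) = Phi q P0 * Phi q M * Phi q W"
        using Phi_mult[OF pC qC P0(1) Mc] Phi_mult[OF pC qC _ Wc, of "P0 * M" n] P0 Mc by simp
      also have "\<dots> = P0 * R' * Phi q M * (R * W)" using PhiP0 PhiW by simp
      also have "\<dots> = P0 * R' * (Phi q M * R) * W" using P0 Rc Mc Wc Phi_carrier[OF Mc] mult_carrier_mat[OF Phi_carrier[OF Mc] Rc(1)] mult_carrier_mat[OF P0(1) Rc(2)] by (simp add: as)
      also have "\<dots> = P0 * (R' * R) * M * W" using gM P0 Rc Mc Wc mult_carrier_mat[OF Rc(1) Mc] mult_carrier_mat[OF P0(1) Rc(2)] mult_carrier_mat[OF Rc(2) Rc(1)] by (simp add: as)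
      also have "\<dots> = P0 * M * W" using R'R P0 Mc by simp
      finally have fixM: "Phi q (P0 * M * W) = P0 * M * W" .
      have "((P0 * M * W) $$ (i, j)) ^ q = Phi q (P0 * M * W) $$ (i, j)"
        using ij P0 Mc Wc by simp
      thus "(P0 * M * W) $$ (i, j) \<in> Fq q" using fixM by (simp add: Fq_def)
    qed

  qed
qed

end
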